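(* Let $q$ be a nonzero complex number and let ${\mathbb A}={\mathbb F}({\rm SP}_q^{2|1})$ be the super-Hopf algebra generated by even $x, y, x^{-1}$ and odd $\theta$ with relations $x\theta=q\theta x$, $\theta y=qy\theta$, $yx=q^{-2}xy$, $\theta^2=q^{1/2}(q-1)yx$, $xx^{-1}={\bf 1}=x^{-1}x$, and Hopf structure $\Delta(x)=x\otimes x$, $\Delta(\theta)=\theta\otimes{\bf 1}+{\bf 1}\otimes\theta$, $\Delta(y)=x^{-1}\otimes y+y\otimes x^{-1}$, $\epsilon(x)=1$, $\epsilon(\theta)=\epsilon(y)=0$, $S(x)=x^{-1}$, $S(\theta)=-\theta$, $S(y)=-xyx$. Let ${\mathbb U}$ be the dual super-Hopf algebra generated by $K$, $\nabla$, $N$, where the dual pairing $\langle\,,\rangle:{\mathbb U}\times{\mathbb A}\to\mathbb C$ is determined on monomials $f=x^k\theta^l y^n$ by $$\langle K,f\rangle = k\,\delta_{l,0}\delta_{n,0},\quad \langle\nabla,f\rangle=\delta_{l,1},\quad \langle N,f\rangle=\delta_{n,1},\quad \langle 1_{\mathbb U},f\rangle=\epsilon_{\mathbb A}(f)=\delta_{k,0}.$$ Then the generators of ${\mathbb U}$ satisfy $$K\nabla=\nabla K,\quad KN=NK,\quad \nabla N=N\nabla,\quad \nabla^2=0 .$$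
   Context: A dual pairing of super bialgebras ${\mathbb U}$ and ${\mathbb A}$ is a bilinear map $\langle\,,\rangle:{\mathbb U}\times{\mathbb A}\to\mathbb C$ with $\langle u,ab\rangle=\langle\Delta_{\mathbb U}(u),a\otimes b\rangle$, $\langle uv,a\rangle=\langle u\otimes v,\Delta_{\mathbb A}(a)\rangle$, $\langle u,1_{\mathbb A}\rangle=\epsilon_{\mathbb U}(u)$, $\langle 1_{\mathbb U},a\rangle=\epsilon_{\mathbb A}(a)$, extended to tensor products by $\langle u\otimes v,a\otimes b\rangle=(-1)^{\tau(v)\tau(a)}\langle u,a\rangle\langle v,b\rangle$, where $\tau$ denotes the $\mathbb Z_2$-grade ($\theta$ and $\nabla$ odd, the other generators even). The product in ${\mathbb U}$ is thus determined by the coproduct of ${\mathbb A}$ via the pairing. Tensor products of superalgebras use the graded product $(a_1\otimes a_2)(a_3\otimes a_4)=(-1)^{\tau(a_2)\tau(a_3)}a_1a_3\otimes a_2a_4$. *)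

theory Defs
  imports Complex_Main
begin

text \<open>A basis of A is given by the normal-ordered monomials  x^k theta^l y^n
  with k :: int, l \<in> {0,1}, n :: nat; a monomial is encoded as the triple (k,l,n).\<close>

type_synonym mono = "int \<times> nat \<times> nat"

definition mono_one :: mono where "mono_one = (0, 0, 0)"

definition grade :: "mono \<Rightarrow> nat" where
  "grade m = (case m of (k, l, n) \<Rightarrow> l mod 2)"

text \<open>Product of two normal-ordered monomials in A, rewritten in normal order using
  x theta = q theta x, theta y = q y theta, y x = q^-2 x y, theta^2 = q^(1/2)(q-1) y x
  (q^(1/2) := csqrt q).\<close>
definition mono_mult :: "complex \<Rightarrow> mono \<Rightarrow> mono \<Rightarrow> complex \<times> mono" where
  "mono_mult q m1 m2 = (case m1 of (a, b, c) \<Rightarrow> case m2 of (d, e, f) \<Rightarrow>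
     (let co = q powi (- (2 * int c * d + int b * d + int c * int e)) in
      if b = 1 \<and> e = 1
      then (co * csqrt q * (q - 1) * q powi (-2), (a + d + 1, 0, c + f + 1))
      else (co, (a + d, b + e, c + f))))"

text \<open>Elements of A \<otimes> A as formal (unnormalised) sums of terms c * (m1 \<otimes> m2).\<close>
type_synonym tens = "(complex \<times> mono \<times> mono) list"

definition tens_mult :: "complex \<Rightarrow> tens \<Rightarrow> tens \<Rightarrow> tens" where
  "tens_mult q L1 L2 = concat (map (\<lambda>(c, a1, a2). map (\<lambda>(d, a3, a4).
       (let (c1, m1) = mono_mult q a1 a3; (c2, m2) = mono_mult q a2 a4
        in ((-1) ^ (grade a2 * grade a3) * c * d * c1 * c2, m1, m2))) L2) L1)"

definition Delta_theta :: tens where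
  "Delta_theta = [(1, (0, 1, 0), mono_one), (1, mono_one, (0, 1, 0))]"

definition Delta_y :: tens where
  "Delta_y = [(1, (-1, 0, 0), (0, 0, 1)), (1, (0, 0, 1), (-1, 0, 0))]"

fun Delta_y_pow :: "complex \<Rightarrow> nat \<Rightarrow> tens" where
  "Delta_y_pow q 0 = [(1, mono_one, mono_one)]"
| "Delta_y_pow q (Suc n) = tens_mult q (Delta_y_pow q n) Delta_y"

definition Delta :: "complex \<Rightarrow> mono \<Rightarrow> tens" where
  "Delta q m = (case m of (k, l, n) \<Rightarrow>
     tens_mult q (tens_mult q [(1, (k, 0, 0), (k, 0, 0))]
                    (if l = 1 then Delta_theta else [(1, mono_one, mono_one)]))
       (Delta_y_pow q n))"

text \<open>Homogeneous elements of U: (grade, values of the pairing on basis monomials).\<close>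
type_synonym ufun = "nat \<times> (mono \<Rightarrow> complex)"

text \<open>Product in U determined by the pairing:
  <uv, f> = <u \<otimes> v, Delta f> with <u\<otimes>v, a\<otimes>b> = (-1)^(tau v * tau a) <u,a><v,b>.\<close>
definition U_mult :: "complex \<Rightarrow> ufun \<Rightarrow> ufun \<Rightarrow> ufun" where
  "U_mult q u v = ((fst u + fst v) mod 2, (\<lambda>f.
     sum_list (map (\<lambda>(c, f1, f2). c * (-1) ^ (fst v * grade f1) * snd u f1 * snd v f2)
                   (Delta q f))))"

definition U_K :: ufun where
  "U_K = (0, \<lambda>(k, l, n). if l = 0 \<and> n = 0 then of_int k else 0)"

definition U_nabla :: ufun where
  "U_nabla = (1, \<lambda>(k, l, n). if l = 1 then 1 else 0)"

definition U_N :: ufun where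
  "U_N = (0, \<lambda>(k, l, n). if n = 1 then 1 else 0)"

definition U_eq :: "complex \<Rightarrow> ufun \<Rightarrow> ufun \<Rightarrow> bool" where
  "U_eq q u v \<longleftrightarrow> (\<forall>k l n. l \<le> 1 \<longrightarrow> snd u (k, l, n) = snd v (k, l, n))"

definition U_zero :: ufun where "U_zero = (0, \<lambda>_. 0)"

end

theory Submission imports Defs begin

lemma sum_list_concat': "sum_list (concat xss) = sum_list (map sum_list (xss :: 'a::monoid_add list list))"
  by (induction xss) auto

fun R :: "complex \<Rightarrow> nat \<Rightarrow> (complex \<times> nat \<times> nat) list" where
  "R q 0 = [(1, 0, 0)]"
| "R q (Suc n) = concat (map (\<lambda>(a, c1, c2).
      [(a * q powi (2 * int c1), c1, Suc c2), (a * q powi (2 * int c2), Suc c1, c2)]) (R q n))"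

definition emb :: "complex \<times> nat \<times> nat \<Rightarrow> complex \<times> mono \<times> mono" where
  "emb t = (case t of (a, c1, c2) \<Rightarrow> (a, (- int c2, 0, c1), (- int c1, 0, c2)))"

lemma Dyp_R: "Delta_y_pow q n = map emb (R q n)"
proof (induction n)
  case 0
  then show ?case by (simp add: emb_def mono_one_def)
next
  case (Suc n)
  show ?case
    unfolding Delta_y_pow.simps R.simps Suc tens_mult_def map_concat map_map
    by (rule arg_cong[where f=concat], rule map_cong)
       (auto simp: emb_def Delta_y_def mono_mult_def grade_def algebra_simps)
qed

lemma R_sym: "sum_list (map (h :: complex \<times> nat \<times> nat \<Rightarrow> complex) (R q n)) = sum_list (map (\<lambda>(a, c1, c2). h (a, c2, c1)) (R q n))"
proof (induction n arbitrary: h)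
  case 0
  then show ?case by simp
next
  case (Suc n)
  let ?H = "\<lambda>(a, c1, c2). h (a * q powi (2 * int c1), c1, Suc c2) + h (a * q powi (2 * int c2), Suc c1, c2)"
  have "sum_list (map h (R q (Suc n))) = sum_list (map ?H (R q n))"
    by (simp add: map_concat sum_list_concat' map_map o_def split_def)
  also have "\<dots> = sum_list (map (\<lambda>(a, c1, c2). ?H (a, c2, c1)) (R q n))"
    by (rule Suc.IH)
  also have "\<dots> = sum_list (map (\<lambda>(a, c1, c2). h (a, c2, c1)) (R q (Suc n)))"
    apply (simp add: map_concat sum_list_concat' map_map o_def split_def)
    apply (rule arg_cong[where f=sum_list])
      apply (simp add: add.commute)
    done
  finally show ?case .
qed

lemma D0: "Delta q (k, 0, n) = map (\<lambda>(a, c1, c2). (a, (k - int c2, 0, c1), (k - int c1, 0, c2))) (R q n)"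
  unfolding Delta_def Dyp_R
  apply (simp add: tens_mult_def mono_mult_def grade_def mono_one_def map_map o_def)
  apply (intro conjI ballI)
  subgoal for x by (cases x) (simp add: emb_def Let_def)
  done

lemma D1: "Delta q (k, 1, n) =
    map (\<lambda>(a, c1, c2). (a * q powi int c2, (k - int c2, 1, c1), (k - int c1, 0, c2))) (R q n)
  @ map (\<lambda>(a, c1, c2). (a * q powi int c1, (k - int c2, 0, c1), (k - int c1, 1, c2))) (R q n)"
  unfolding Delta_def Dyp_R
  apply (simp add: tens_mult_def mono_mult_def grade_def mono_one_def Delta_theta_def map_map o_def)
  apply (intro conjI ballI)
  subgoal for x by (cases x) (simp add: emb_def Let_def)
  subgoal for x by (cases x) (simp add: emb_def Let_def)
  done

lemma sym_eq:
  assumes "\<And>a c1 c2. (f :: complex \<times> nat \<times> nat \<Rightarrow> complex) (a, c1, c2) = g (a, c2, c1)"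
  shows "sum_list (map f (R q n)) = sum_list (map g (R q n))"
proof -
  have "sum_list (map g (R q n)) = sum_list (map (\<lambda>(a, c1, c2). g (a, c2, c1)) (R q n))"
    by (rule R_sym)
  also have "\<dots> = sum_list (map f (R q n))"
    by (rule arg_cong[where f=sum_list], rule map_cong[OF refl]) (auto simp: assms)
  finally show ?thesis by simp
qed

lemma sym_eq2:
  assumes "\<And>a c1 c2. (f1 :: complex \<times> nat \<times> nat \<Rightarrow> complex) (a, c1, c2) + f2 (a, c1, c2)
       = g1 (a, c2, c1) + g2 (a, c2, c1)"
  shows "sum_list (map f1 (R q n)) + sum_list (map f2 (R q n))
       = sum_list (map g1 (R q n)) + sum_list (map g2 (R q n))"
proof -
  have "sum_list (map f1 (R q n)) + sum_list (map f2 (R q n)) = sum_list (map (\<lambda>t. f1 t + f2 t) (R q n))"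
    by (simp add: sum_list_addf)
  also have "\<dots> = sum_list (map (\<lambda>t. g1 t + g2 t) (R q n))"
    by (rule sym_eq) (simp add: assms)
  also have "\<dots> = sum_list (map g1 (R q n)) + sum_list (map g2 (R q n))"
    by (simp add: sum_list_addf)
  finally show ?thesis .
qed

lemma zero_eq:
  assumes "\<And>t. (f :: complex \<times> nat \<times> nat \<Rightarrow> complex) t = 0"
  shows "sum_list (map f L) = 0"
  using assms by (induction L) auto

lemma snd_U_zero: "snd U_zero f = 0" by (simp add: U_zero_def)

lemma cases_l: "(l::nat) \<le> 1 \<Longrightarrow> (l = 0 \<Longrightarrow> P) \<Longrightarrow> (l = 1 \<Longrightarrow> P) \<Longrightarrow> P" by linarith

theorem theorem4p1:
  fixes q :: complex
  assumes "q \<noteq> 0"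
  shows "U_eq q (U_mult q U_K U_nabla) (U_mult q U_nabla U_K)
       \<and> U_eq q (U_mult q U_K U_N) (U_mult q U_N U_K)
       \<and> U_eq q (U_mult q U_nabla U_N) (U_mult q U_N U_nabla)
       \<and> U_eq q (U_mult q U_nabla U_nabla) U_zero"
  unfolding U_eq_def
proof (intro conjI allI impI)
  fix k l n assume l: "(l::nat) \<le> 1"
  show "snd (U_mult q U_K U_nabla) (k, l, n) = snd (U_mult q U_nabla U_K) (k, l, n)"
  proof (rule cases_l[OF l])
    assume l0: "l = 0" show ?thesis unfolding l0 U_mult_def D0 snd_conv map_map
      by (intro sym_eq) (simp add: U_K_def U_nabla_def grade_def)
  next
    assume l1: "l = 1" show ?thesis unfolding l1 U_mult_def D1 snd_conv map_map map_append sum_list_append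
      by (intro sym_eq2) (simp add: U_K_def U_nabla_def grade_def)
  qed
  show "snd (U_mult q U_K U_N) (k, l, n) = snd (U_mult q U_N U_K) (k, l, n)"
  proof (rule cases_l[OF l])
    assume l0: "l = 0" show ?thesis unfolding l0 U_mult_def D0 snd_conv map_map
      by (intro sym_eq) (simp add: U_K_def U_N_def grade_def)
  next
    assume l1: "l = 1" show ?thesis unfolding l1 U_mult_def D1 snd_conv map_map map_append sum_list_append
      by (intro sym_eq2) (simp add: U_K_def U_N_def grade_def)
  qed
  show "snd (U_mult q U_nabla U_N) (k, l, n) = snd (U_mult q U_N U_nabla) (k, l, n)"
  proof (rule cases_l[OF l])
    assume l0: "l = 0" show ?thesis unfolding l0 U_mult_def D0 snd_conv map_map
      by (intro sym_eq) (simp add: U_N_def U_nabla_def grade_def)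
  next
    assume l1: "l = 1" show ?thesis unfolding l1 U_mult_def D1 snd_conv map_map map_append sum_list_append
      by (intro sym_eq2) (simp add: U_N_def U_nabla_def grade_def)
  qed
  show "snd (U_mult q U_nabla U_nabla) (k, l, n) = snd U_zero (k, l, n)"
  proof (rule cases_l[OF l])
    assume l0: "l = 0" show ?thesis unfolding l0 U_mult_def D0 snd_conv map_map snd_U_zero
      by (intro zero_eq) (simp add: U_nabla_def grade_def split: prod.splits)
  next
    assume l1: "l = 1" show ?thesis unfolding l1 U_mult_def D1 snd_conv map_map map_append sum_list_append snd_U_zero
      by (simp add: zero_eq U_nabla_def grade_def split: prod.splits)
  qed
qed

end
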